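(* Let $H$ be a finite-dimensional real Hilbert space with inner product $\cdot$ and norm $\|\cdot\|$. Let $A\in B(H,H)$ be symmetric with $A>0$, and suppose there is $\ell_0>0$ with $\|A^{1/2}\mathbf{u}\|^2\ge \ell_0\|\mathbf{u}\|^2$ for all $\mathbf{u}\in H$. Let $\mathbf{N}:H\to H$ be locally Lipschitz with $\mathbf{N}(\mathbf{u})\cdot\mathbf{u}=0$ for all $\mathbf{u}\in H$. Let $\mathbf{F}(t)\equiv\mathbf{F}\in H$ be time independent and let $\gamma>0$. Let $\mathscr{A}$ denote the global attractor of the original model $\frac{d\mathbf{u}}{dt}+A\mathbf{u}+\mathbf{N}(\mathbf{u})=\mathbf{F}$ on $H$. Then the augmented system on $H\times\mathbb{R}$ $$\frac{d\mathbf{u}}{dt}+A\mathbf{u}+q\,\mathbf{N}(\mathbf{u})=\mathbf{F},\qquad \frac{dq}{dt}-\mathbf{N}(\mathbf{u})\cdot\mathbf{u}=-\gamma q+\gamma,$$ possesses a global attractor $\mathscr{A}_q$, and $\mathscr{A}_q=\mathscr{A}\times\{1\}$.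
   Context: A global attractor is a compact invariant set attracting all bounded sets under the solution semigroup. The original model has a global attractor under these assumptions. *)

theory Defs
  imports "HOL-Analysis.Analysis"
begin

definition fwd_solution :: "('a::real_normed_vector \<Rightarrow> 'a) \<Rightarrow> 'a \<Rightarrow> (real \<Rightarrow> 'a) \<Rightarrow> bool" where
  "fwd_solution f u0 x \<longleftrightarrow> x 0 = u0 \<and>
     (\<forall>t\<ge>0. (x has_vector_derivative f (x t)) (at t within {0..}))"

definition well_posed :: "('a::real_normed_vector \<Rightarrow> 'a) \<Rightarrow> bool" where
  "well_posed f \<longleftrightarrow> (\<forall>u0. \<exists>x. fwd_solution f u0 x \<and>
      (\<forall>y. fwd_solution f u0 y \<longrightarrow> (\<forall>t\<ge>0. y t = x t)))"

text \<open>The solution semigroup S(t) u0 (meaningful for t \<ge> 0 when well_posed f).\<close>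
definition semiflow :: "('a::real_normed_vector \<Rightarrow> 'a) \<Rightarrow> real \<Rightarrow> 'a \<Rightarrow> 'a" where
  "semiflow f t u0 = (THE v. \<exists>x. fwd_solution f u0 x \<and> x t = v)"

definition global_attractor :: "('a::real_normed_vector \<Rightarrow> 'a) \<Rightarrow> 'a set \<Rightarrow> bool" where
  "global_attractor f K \<longleftrightarrow> well_posed f \<and> K \<noteq> {} \<and> compact K \<and>
     (\<forall>t\<ge>0. semiflow f t ` K = K) \<and>
     (\<forall>B. bounded B \<longrightarrow> (\<forall>e>0. \<exists>T. \<forall>t\<ge>T. \<forall>b\<in>B. infdist (semiflow f t b) K < e))"

definition symmetric_op :: "('a::real_inner \<Rightarrow> 'a) \<Rightarrow> bool" where
  "symmetric_op A \<longleftrightarrow> (\<forall>x y. inner (A x) y = inner x (A y))"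

definition original_field :: "('a::real_inner \<Rightarrow> 'a) \<Rightarrow> ('a \<Rightarrow> 'a) \<Rightarrow> 'a \<Rightarrow> 'a \<Rightarrow> 'a" where
  "original_field A N F u = F - A u - N u"

definition augmented_field :: "('a::real_inner \<Rightarrow> 'a) \<Rightarrow> ('a \<Rightarrow> 'a) \<Rightarrow> 'a \<Rightarrow> real \<Rightarrow> 'a \<times> real \<Rightarrow> 'a \<times> real" where
  "augmented_field A N F \<gamma> z = (case z of (u, q) \<Rightarrow>
      (F - A u - q *\<^sub>R N u, inner (N u) u - \<gamma> * q + \<gamma>))"

end

theory Submission
  imports Defs
begin
lemma at_within_atLeast0:
  assumes "(t::real) \<ge> 0" "T > t"
  shows "at t within {0..T} = at t within {0..}"
  by (rule at_within_nhd[of _ "{..<T}"]) (use assms in auto)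

lemma nonincr_lemma:
  fixes psi :: "real \<Rightarrow> real"
  assumes d: "\<And>t. t \<ge> 0 \<Longrightarrow> (psi has_real_derivative d t) (at t within {0..})"
    and neg: "\<And>t. t > 0 \<Longrightarrow> d t \<le> 0" and t: "t \<ge> 0"
  shows "psi t \<le> psi 0"
proof (rule DERIV_nonpos_imp_decreasing_open[OF t])
  fix x :: real assume x: "0 < x" "x < t"
  have "at x within {0..} = at x"
    by (rule at_within_interior) (use x in auto)
  then show "\<exists>y. (psi has_real_derivative y) (at x) \<and> y \<le> 0"
    using d[of x] neg[of x] x by auto
next
  show "continuous_on {0..t} psi"
  proof (rule continuous_on_subset[of "{0..}"])
    show "continuous_on {0..} psi"
      unfolding continuous_on_eq_continuous_within
      using d DERIV_continuous by fastforce
  qed auto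
qed

lemma shift_deriv:
  assumes d: "\<And>t. t \<ge> 0 \<Longrightarrow> (x has_vector_derivative f t) (at t within {0..})"
    and s: "s \<ge> (0::real)" and sg: "\<sigma> \<ge> 0"
  shows "((\<lambda>\<sigma>. x (s + \<sigma>)) has_vector_derivative f (s + \<sigma>)) (at \<sigma> within {0..})"
proof -
  have 1: "((\<lambda>\<sigma>. s + \<sigma>) has_vector_derivative 1) (at \<sigma> within {0..})"
    by (auto intro!: derivative_eq_intros)
  have 2: "(x has_vector_derivative f (s + \<sigma>)) (at ((\<lambda>\<sigma>. s + \<sigma>) \<sigma>) within (\<lambda>\<sigma>. s + \<sigma>) ` {0..})"
    by (rule has_vector_derivative_within_subset[OF d]) (use s sg in auto)
  show ?thesis using vector_diff_chain_within[OF 1 2] by (simp add: o_def)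
qed

lemma sqnorm_deriv:
  assumes "(w has_vector_derivative w') (at t within S)"
  shows "((\<lambda>t. inner (w t) (w t)) has_real_derivative 2 * inner (w t) w') (at t within S)"
proof -
  have "((\<lambda>t. inner (w t) (w t)) has_derivative (\<lambda>h. inner (w t) (h *\<^sub>R w') + inner (h *\<^sub>R w') (w t))) (at t within S)"
    using assms unfolding has_vector_derivative_def by (intro has_derivative_inner) auto
  then show ?thesis unfolding has_field_derivative_def
    by (rule has_derivative_eq_rhs) (auto simp: inner_commute algebra_simps fun_eq_iff)
qed

lemma int_deriv:
  fixes h :: "real \<Rightarrow> 'a::banach"
  assumes "continuous_on {0..} h" "t \<ge> 0"
  shows "((\<lambda>u. integral {0..u} h) has_vector_derivative h t) (at t within {0..})"
proof -
  have "((\<lambda>u. integral {0..u} h) has_vector_derivative h t) (at t within {0..t+1})"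
    by (rule integral_has_vector_derivative) (use assms in \<open>auto intro: continuous_on_subset\<close>)
  then show ?thesis using at_within_atLeast0[of t "t+1"] assms by simp
qed

lemma cont_glue:
  assumes "\<And>T. T \<ge> 0 \<Longrightarrow> continuous_on {0..T} g"
  shows "continuous_on {0..} (g::real \<Rightarrow> 'a::topological_space)"
  unfolding continuous_on_eq_continuous_within
proof
  fix t :: real assume "t \<in> {0..}"
  then have "continuous (at t within {0..t+1}) g"
    using assms[of "t+1"] by (auto simp: continuous_on_eq_continuous_within)
  then show "continuous (at t within {0..}) g"
    using at_within_atLeast0[of t "t+1"] \<open>t \<in> {0..}\<close> by (simp add: continuous_within)
qed

lemma int_pow_bound:
  fixes t :: real assumes "t \<ge> 0"
  shows "((\<lambda>s. s ^ n) has_integral (t ^ Suc n / Suc n)) {0..t}"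
proof -
  have "((\<lambda>s. s ^ n) has_integral ((\<lambda>s. s ^ Suc n / Suc n) t - (\<lambda>s. s ^ Suc n / Suc n) 0)) {0..t}"
  proof (rule fundamental_theorem_of_calculus[OF assms])
    fix x :: real
    have "((\<lambda>s. s ^ Suc n) has_real_derivative real (Suc n) * x ^ n) (at x)"
      using DERIV_pow[of "Suc n" x] by simp
    note dd = this
    have "((\<lambda>s. s ^ Suc n / Suc n) has_real_derivative x ^ n) (at x)"
      using DERIV_cdivide[OF dd, of "real (Suc n)"] by simp
    then show "((\<lambda>s. s ^ Suc n / Suc n) has_vector_derivative x ^ n) (at x within {0..t})"
      by (simp add: has_real_derivative_iff_has_vector_derivative[symmetric] has_field_derivative_at_within)
  qed
  then show ?thesis by simp
qed

lemma picard:
  fixes f :: "real \<Rightarrow> 'a::banach \<Rightarrow> 'a"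
  assumes L: "L \<ge> 0" and lip: "\<And>t u v. t \<ge> 0 \<Longrightarrow> norm (f t u - f t v) \<le> L * norm (u - v)"
    and cont: "\<And>x. continuous_on {0..} x \<Longrightarrow> continuous_on {0..} (\<lambda>s. f s (x s))"
  shows "\<exists>x. x 0 = u0 \<and> (\<forall>t\<ge>0. (x has_vector_derivative f t (x t)) (at t within {0..}))"
proof -
  define P where "P g = (\<lambda>t. u0 + integral {0..t} (\<lambda>s. f s (g s)))" for g :: "real \<Rightarrow> 'a"
  have Pd: "(P g has_vector_derivative f t (g t)) (at t within {0..})"
    if "continuous_on {0..} g" "t \<ge> 0" for g t
    unfolding P_def using int_deriv[OF cont[OF that(1)] that(2)]
    by (auto intro!: derivative_eq_intros)
  have Pc: "continuous_on {0..} (P g)" if "continuous_on {0..} g" for g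
    unfolding continuous_on_eq_continuous_within
    using Pd[OF that] has_vector_derivative_continuous by blast
  define X where "X n = (P ^^ n) (\<lambda>_. u0)" for n
  have XS: "X (Suc n) = P (X n)" for n by (simp add: X_def)
  have Xc: "continuous_on {0..} (X n)" for n
    by (induction n) (auto simp: X_def intro: Pc)
  have intg: "(\<lambda>s. f s (g s)) integrable_on {0..t}" if "continuous_on {0..} g" for g t
    by (rule integrable_continuous_real) (rule continuous_on_subset[OF cont[OF that]], auto)
  define Y where "Y t = u0 + suminf (\<lambda>i. X (Suc i) t - X i t)" for t
  have ulim: "uniform_limit {0..T} X Y sequentially" if T: "T \<ge> 0" for T
  proof -
    obtain M where M: "\<And>t. t \<in> {0..T} \<Longrightarrow> norm (X 1 t - X 0 t) \<le> M"
    proof -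
      have "compact ((\<lambda>t. X 1 t - X 0 t) ` {0..T})"
        by (rule compact_continuous_image) (auto intro!: continuous_intros continuous_on_subset[OF Xc])
      then obtain M where "\<forall>x\<in>(\<lambda>t. X 1 t - X 0 t) ` {0..T}. norm x \<le> M"
        using compact_imp_bounded bounded_iff by metis
      then show ?thesis by (intro that[of M]) auto
    qed
    have bnd: "norm (X (Suc n) t - X n t) \<le> M * (L * t) ^ n / fact n" if "t \<in> {0..T}" for n t
      using that
    proof (induction n arbitrary: t)
      case 0 then show ?case using M by simp
    next
      case (Suc n)
      have t0: "t \<ge> 0" using Suc.prems by auto
      have "X (Suc (Suc n)) t - X (Suc n) t = integral {0..t} (\<lambda>s. f s (X (Suc n) s) - f s (X n s))"
      proof -
        have "X (Suc (Suc n)) t - X (Suc n) t = integral {0..t} (\<lambda>s. f s (X (Suc n) s)) - integral {0..t} (\<lambda>s. f s (X n s))"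
          by (simp only: XS) (simp add: P_def)
        also have "\<dots> = integral {0..t} (\<lambda>s. f s (X (Suc n) s) - f s (X n s))"
          by (rule integral_diff[symmetric]) (intro intg Xc)+
        finally show ?thesis .
      qed
      also have "norm \<dots> \<le> integral {0..t} (\<lambda>s. L * (M * (L * s) ^ n / fact n))"
      proof (rule integral_norm_bound_integral)
        show "(\<lambda>s. f s (X (Suc n) s) - f s (X n s)) integrable_on {0..t}"
          by (intro integrable_diff intg Xc)
        show "(\<lambda>s. L * (M * (L * s) ^ n / fact n)) integrable_on {0..t}"
          by (intro integrable_continuous_real continuous_intros) auto
        fix s assume s: "s \<in> {0..t}"
        have "norm (f s (X (Suc n) s) - f s (X n s)) \<le> L * norm (X (Suc n) s - X n s)"
          using lip s by auto
        also have "\<dots> \<le> L * (M * (L * s) ^ n / fact n)"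
          using mult_left_mono[OF Suc.IH[of s] L] s Suc.prems by simp
        finally show "norm (f s (X (Suc n) s) - f s (X n s)) \<le> L * (M * (L * s) ^ n / fact n)" .
      qed
      also have "integral {0..t} (\<lambda>s. L * (M * (L * s) ^ n / fact n)) = M * (L * t) ^ Suc n / fact (Suc n)"
      proof -
        have "((\<lambda>s. (L * M * L ^ n / fact n) * s ^ n) has_integral (L * M * L ^ n / fact n) * (t ^ Suc n / Suc n)) {0..t}"
          by (intro has_integral_mult_right int_pow_bound t0)
        then have "integral {0..t} (\<lambda>s. (L * M * L ^ n / fact n) * s ^ n) = (L * M * L ^ n / fact n) * (t ^ Suc n / Suc n)"
          by (rule integral_unique)
        moreover have "(\<lambda>s. L * (M * (L * s) ^ n / fact n)) = (\<lambda>s. (L * M * L ^ n / fact n) * s ^ n)"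
          by (auto simp: fun_eq_iff power_mult_distrib)
        ultimately have "integral {0..t} (\<lambda>s. L * (M * (L * s) ^ n / fact n)) = (L * M * L ^ n / fact n) * (t ^ Suc n / Suc n)"
          by simp
        also have "\<dots> = M * (L * t) ^ Suc n / fact (Suc n)"
          by (simp add: power_mult_distrib fact_Suc field_simps del: of_nat_Suc)
        finally show ?thesis .

      qed
      finally show ?case .
    qed
    have M0: "M \<ge> 0" using M[of 0] T by (auto intro: order_trans[OF norm_ge_zero])
    have ul: "uniform_limit {0..T} (\<lambda>n t. \<Sum>i<n. X (Suc i) t - X i t) (\<lambda>t. suminf (\<lambda>i. X (Suc i) t - X i t)) sequentially"
    proof (rule Weierstrass_m_test)
      fix n t assume t: "t \<in> {0..T}"
      have "norm (X (Suc n) t - X n t) \<le> M * (L * t) ^ n / fact n" by (rule bnd[OF t])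
      also have "\<dots> \<le> M * (L * T) ^ n / fact n"
        using t L M0 by (auto intro!: divide_right_mono mult_left_mono power_mono mult_left_mono)
      finally show "norm (X (Suc n) t - X n t) \<le> M * (L * T) ^ n / fact n" .
    next
      show "summable (\<lambda>n. M * (L * T) ^ n / fact n)"
        using summable_mult[OF summable_exp[of "L * T"], of M] by (simp add: field_simps)
    qed
    have "uniform_limit {0..T} (\<lambda>n t. u0 + (\<Sum>i<n. X (Suc i) t - X i t)) Y sequentially"
      unfolding Y_def by (intro uniform_limit_intros ul)
    moreover have "(\<lambda>n t. u0 + (\<Sum>i<n. X (Suc i) t - X i t)) = X"
    proof (intro ext)
      fix n t
      have "(\<Sum>i<n. X (Suc i) t - X i t) = X n t - X 0 t"
        by (rule sum_lessThan_telescope)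
      then show "u0 + (\<Sum>i<n. X (Suc i) t - X i t) = X n t" by (simp add: X_def)
    qed
    ultimately show ?thesis by simp
  qed
  have Yc: "continuous_on {0..} Y"
    by (rule cont_glue, rule uniform_limit_theorem[OF _ ulim]) (auto intro!: always_eventually continuous_on_subset[OF Xc])
  have fixY: "Y t = P Y t" if t: "t \<ge> 0" for t
  proof -
    have l1: "(\<lambda>n. X (Suc n) t) \<longlonglongrightarrow> Y t"
      using tendsto_uniform_limitI[OF ulim[OF t], of t] t by (auto intro: LIMSEQ_Suc)
    have "(\<lambda>n. X (Suc n) t) \<longlonglongrightarrow> P Y t"
    proof -
      have "(\<lambda>n. integral {0..t} (\<lambda>s. f s (X n s))) \<longlonglongrightarrow> integral {0..t} (\<lambda>s. f s (Y s))"
      proof (rule LIMSEQ_I)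
        fix r :: real assume r: "r > 0"
        define e where "e = r / (L * t + 1)"
        have "L * t \<ge> 0" using L t by simp
        then have e: "e > 0" using r by (auto simp: e_def)
        obtain n0 where n0: "\<And>n s. n \<ge> n0 \<Longrightarrow> s \<in> {0..t} \<Longrightarrow> dist (X n s) (Y s) < e"
          using uniform_limitD[OF ulim[OF t] e] unfolding eventually_sequentially by blast
        show "\<exists>no. \<forall>n\<ge>no. norm (integral {0..t} (\<lambda>s. f s (X n s)) - integral {0..t} (\<lambda>s. f s (Y s))) < r"
        proof (intro exI allI impI)
          fix n assume n: "n \<ge> n0"
          have "integral {0..t} (\<lambda>s. f s (X n s)) - integral {0..t} (\<lambda>s. f s (Y s))
                = integral {0..t} (\<lambda>s. f s (X n s) - f s (Y s))"
            by (simp add: integral_diff intg Xc Yc)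
          also have "norm \<dots> \<le> (L * e) * measure lborel {0..t}"
          proof (rule has_integral_bound_real[where S="{}"])
            show "((\<lambda>s. f s (X n s) - f s (Y s)) has_integral integral {0..t} (\<lambda>s. f s (X n s) - f s (Y s))) {0..t}"
              by (intro integrable_integral integrable_diff intg Xc Yc)
            fix s assume s: "s \<in> {0..t} - {}"
            have "norm (f s (X n s) - f s (Y s)) \<le> L * norm (X n s - Y s)" using lip s by auto
            also have "\<dots> \<le> L * e" using n0[OF n, of s] s L by (auto simp: dist_norm intro: mult_left_mono)
            finally show "norm (f s (X n s) - f s (Y s)) \<le> L * e" .
          qed (use L e in auto)
          also have "\<dots> = L * t * e" using t by simp
          also have "\<dots> < r"
          proof -
            have lt: "L * t \<ge> 0" using L t by simp
            have "L * t * e = r * (L * t / (L * t + 1))" unfolding e_def by (simp add: field_simps)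
            also have "\<dots> < r * 1" using lt r by (intro mult_strict_left_mono) auto
            finally show ?thesis by simp
          qed
          finally show "norm (integral {0..t} (\<lambda>s. f s (X n s)) - integral {0..t} (\<lambda>s. f s (Y s))) < r" .
        qed
      qed
      then have "(\<lambda>n. u0 + integral {0..t} (\<lambda>s. f s (X n s))) \<longlonglongrightarrow> u0 + integral {0..t} (\<lambda>s. f s (Y s))"
        by (intro tendsto_intros)
      then show ?thesis by (simp add: XS P_def)
    qed
    with l1 show ?thesis using LIMSEQ_unique by blast
  qed
  show ?thesis
  proof (intro exI conjI allI impI)
    show "P Y 0 = u0" by (simp add: P_def)
    fix t :: real assume t: "t \<ge> 0"
    show "(P Y has_vector_derivative f t (P Y t)) (at t within {0..})"
      using Pd[OF Yc t] fixY[OF t] by simp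
  qed
qed


lemma coercive_exists:
  fixes A :: "'a::euclidean_space \<Rightarrow> 'a"
  assumes lin: "bounded_linear A" and pos: "\<forall>u. u \<noteq> 0 \<longrightarrow> inner (A u) u > 0"
  shows "\<exists>c>0. \<forall>u. inner (A u) u \<ge> c * (norm u)\<^sup>2"
proof -
  obtain b :: 'a where b: "b \<in> Basis" using nonempty_Basis by blast
  have ne: "sphere (0::'a) 1 \<noteq> {}" using b by (auto intro!: exI[of _ b])
  have ct: "continuous_on (sphere 0 1) (\<lambda>u. inner (A u) u)"
    using lin by (intro continuous_intros) (auto intro: linear_continuous_on)
  obtain x0 where x0: "x0 \<in> sphere 0 1" and mn: "\<And>y. y \<in> sphere 0 1 \<Longrightarrow> inner (A x0) x0 \<le> inner (A y) y"
    using continuous_attains_inf[OF compact_sphere ne ct] by blast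
  have x00: "x0 \<noteq> 0" using x0 by auto
  define c where "c = inner (A x0) x0"
  have c: "c > 0" using pos x00 by (simp add: c_def)
  show ?thesis
  proof (intro exI conjI allI)
    show "c > 0" by fact
    fix u :: 'a
    show "inner (A u) u \<ge> c * (norm u)\<^sup>2"
    proof (cases "u = 0")
      case True then show ?thesis using linear_0[OF bounded_linear.linear[OF lin]] by simp
    next
      case False
      define v where "v = (1 / norm u) *\<^sub>R u"
      have v: "v \<in> sphere 0 1" using False by (simp add: v_def)
      have uv: "u = norm u *\<^sub>R v" using False by (simp add: v_def)
      have "inner (A u) u = (norm u)\<^sup>2 * inner (A v) v"
        by (subst (1 2) uv) (simp add: linear_cmul[OF bounded_linear.linear[OF lin]] power2_eq_square)
      moreover have "inner (A v) v \<ge> c" using mn[OF v] by (simp add: c_def)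
      ultimately show ?thesis using mult_right_mono[OF _ zero_le_power2, of c "inner (A v) v" "norm u"] by (simp add: mult.commute)
    qed
  qed
qed

lemma apriori:
  fixes A :: "'a::real_inner \<Rightarrow> 'a"
  assumes coer: "\<forall>u. inner (A u) u \<ge> c * (norm u)\<^sup>2" and c: "c > 0"
    and d: "\<And>t. t \<ge> 0 \<Longrightarrow> (u has_vector_derivative F - A (u t) - G t (u t)) (at t within {0..})"
    and orth: "\<And>t v. inner (G t v) v = 0"
    and t: "t \<ge> 0"
  shows "norm (u t) \<le> max (norm (u 0)) (norm F / c)"
proof -
  define K where "K = (norm F / c)\<^sup>2"
  define phi where "phi t = inner (u t) (u t)" for t
  define dphi where "dphi t = 2 * inner (u t) (F - A (u t) - G t (u t))" for t
  have phid: "(phi has_real_derivative dphi s) (at s within {0..})" if "s \<ge> 0" for s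
    unfolding phi_def dphi_def by (rule sqnorm_deriv[OF d[OF that]])
  define psi where "psi s = exp (c * s) * (phi s - K)" for s
  have psid: "(psi has_real_derivative exp (c * s) * c * (phi s - K) + dphi s * exp (c * s)) (at s within {0..})"
    if "s \<ge> 0" for s
  proof -
    have e: "((\<lambda>s. exp (c * s)) has_real_derivative exp (c * s) * c) (at s within {0..})"
      by (auto intro!: derivative_eq_intros)
    have p: "((\<lambda>s. phi s - K) has_real_derivative dphi s) (at s within {0..})"
      using phid[OF that] by (auto intro!: derivative_eq_intros)
    show ?thesis unfolding psi_def using DERIV_mult[OF e p] by simp
  qed
  have neg: "exp (c * s) * c * (phi s - K) + dphi s * exp (c * s) \<le> 0" for s
  proof -
    have "inner (u s) (G s (u s)) = 0" using orth by (simp add: inner_commute)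
    then have "dphi s = 2 * inner (u s) F - 2 * inner (A (u s)) (u s)"
      by (simp add: dphi_def inner_diff_right inner_commute)
    also have "\<dots> \<le> 2 * (norm (u s) * norm F) - 2 * (c * (norm (u s))\<^sup>2)"
      using Cauchy_Schwarz_ineq2[of "u s" F] coer by (auto intro: diff_mono)
    also have "\<dots> \<le> c * (norm (u s))\<^sup>2 + (norm F)\<^sup>2 / c - 2 * (c * (norm (u s))\<^sup>2)"
    proof -
      have "0 \<le> (c * norm (u s) - norm F)\<^sup>2 / c" using c by simp
      then have "2 * (norm (u s) * norm F) \<le> c * (norm (u s))\<^sup>2 + (norm F)\<^sup>2 / c"
        using c by (simp add: power2_eq_square field_simps)
      then show ?thesis by simp
    qed
    finally have "dphi s \<le> - c * phi s + c * K"
      using c by (simp add: phi_def K_def power2_norm_eq_inner[symmetric] power_divide power2_eq_square field_simps)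
    then have "c * (phi s - K) + dphi s \<le> 0" by (simp add: algebra_simps)
    then have "exp (c * s) * (c * (phi s - K) + dphi s) \<le> 0"
      by (simp add: mult_nonneg_nonpos)
    then show ?thesis by (simp add: algebra_simps)
  qed
  have "psi t \<le> psi 0" by (rule nonincr_lemma[OF psid neg t])
  then have "exp (c * t) * (phi t - K) \<le> phi 0 - K" by (simp add: psi_def)
  then have le: "phi t \<le> max (phi 0) K"
  proof -
    assume h: "exp (c * t) * (phi t - K) \<le> phi 0 - K"
    have e1: "exp (c * t) \<ge> 1" using c t by simp
    show ?thesis
    proof (cases "phi t \<le> K")
      case True then show ?thesis by simp
    next
      case False
      then have "phi t - K \<le> exp (c * t) * (phi t - K)" using e1 by (simp add: mult_le_cancel_right1)
      with h show ?thesis by simp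
    qed
  qed
  have "(norm (u t))\<^sup>2 \<le> (norm (u 0))\<^sup>2 \<or> (norm (u t))\<^sup>2 \<le> (norm F / c)\<^sup>2"
    using le unfolding le_max_iff_disj phi_def K_def power2_norm_eq_inner[symmetric] .
  then show ?thesis
  proof
    assume "(norm (u t))\<^sup>2 \<le> (norm (u 0))\<^sup>2"
    then have "norm (u t) \<le> norm (u 0)" by (rule power2_le_imp_le) simp
    then show ?thesis by simp
  next
    assume "(norm (u t))\<^sup>2 \<le> (norm F / c)\<^sup>2"
    then have "norm (u t) \<le> norm F / c" by (rule power2_le_imp_le) (use c in simp)
    then show ?thesis by simp
  qed
qed

lemma N_lip_ball:
  fixes N :: "'a::euclidean_space \<Rightarrow> 'a"
  assumes "\<forall>x. \<exists>r>0. \<exists>L. L-lipschitz_on (cball x r) N"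
  shows "\<exists>L. L-lipschitz_on (cball 0 R) N"
proof -
  have ll: "local_lipschitz {0::real} (cball 0 R) (\<lambda>t. N)"
  proof (rule local_lipschitzI)
    fix t x assume "t \<in> {0::real}" "x \<in> cball (0::'a) R"
    obtain r L where "r > 0" "L-lipschitz_on (cball x r) N" using assms by blast
    then show "\<exists>u>0. \<exists>L. \<forall>t\<in>cball t u \<inter> {0}. L-lipschitz_on (cball x u \<inter> cball 0 R) N"
      by (auto intro: lipschitz_on_subset)
  qed
  obtain L where "\<And>t. t \<in> {0::real} \<Longrightarrow> L-lipschitz_on (cball 0 R) N"
    by (rule local_lipschitz_compact_implies_lipschitz[OF ll]) auto
  then show ?thesis by blast
qed

lemma closest_ball:
  fixes u :: "'a::euclidean_space"
  assumes R: "R > 0" and u: "norm u > R"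
  shows "closest_point (cball 0 R) u = (R / norm u) *\<^sub>R u"
proof (rule closest_point_unique[symmetric])
  show "(R / norm u) *\<^sub>R u \<in> cball 0 R" using R u by simp
  have eq: "u - (R / norm u) *\<^sub>R u = (1 - R / norm u) *\<^sub>R u" by (simp add: algebra_simps)
  have "norm ((1 - R / norm u) *\<^sub>R u) = \<bar>1 - R / norm u\<bar> * norm u" by simp
  also have "\<dots> = norm u - R"
  proof -
    have "R / norm u < 1" using R u by (subst divide_less_eq_1_pos) auto
    then have "\<bar>1 - R / norm u\<bar> = 1 - R / norm u" by simp
    moreover have "norm u > 0" using u R by linarith
    ultimately show ?thesis by (simp add: field_simps)
  qed
  finally have "dist u ((R / norm u) *\<^sub>R u) = norm u - R"
    unfolding dist_norm eq .

  then show "\<forall>z\<in>cball 0 R. dist u ((R / norm u) *\<^sub>R u) \<le> dist u z"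
    using norm_triangle_ineq2[of u] by (auto simp: dist_norm intro: order_trans[OF _ norm_triangle_ineq2])
qed auto

lemma closest_orth:
  fixes N :: "'a::euclidean_space \<Rightarrow> 'a"
  assumes orth: "\<forall>u. inner (N u) u = 0" and R: "R > 0"
  shows "inner (N (closest_point (cball 0 R) u)) u = 0"
proof (cases "norm u \<le> R")
  case True then show ?thesis using orth by (simp add: closest_point_self)
next
  case False
  define a where "a = R / norm u"
  have a: "a > 0" using False R unfolding a_def by (intro divide_pos_pos) auto
  have "inner (N (a *\<^sub>R u)) (a *\<^sub>R u) = 0" using orth by blast
  then have "inner (N (a *\<^sub>R u)) u = 0" using a by simp
  then show ?thesis using closest_ball[OF R, of u] False by (simp add: a_def)
qed


lemma compare:
  fixes A N :: "'a::real_inner \<Rightarrow> 'a"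
  assumes lin: "linear A" and Apos: "\<forall>w. inner (A w) w \<ge> 0"
    and d1: "\<And>s. s \<ge> 0 \<Longrightarrow> (ua has_vector_derivative F - A (ua s) - qa s *\<^sub>R N (ua s)) (at s within {0..})"
    and d2: "\<And>s. s \<ge> 0 \<Longrightarrow> (ub has_vector_derivative F - A (ub s) - qb s *\<^sub>R N (ub s)) (at s within {0..})"
    and b1: "\<And>s. s \<ge> 0 \<Longrightarrow> norm (ua s) \<le> R" and b2: "\<And>s. s \<ge> 0 \<Longrightarrow> norm (ub s) \<le> R"
    and lip: "L-lipschitz_on (cball 0 R) N"
    and M: "\<And>v. norm v \<le> R \<Longrightarrow> norm (N v) \<le> M"
    and Q: "\<And>s. s \<ge> 0 \<Longrightarrow> \<bar>qb s\<bar> \<le> Q" and Q0: "Q \<ge> 0"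
    and del: "\<And>s. s \<ge> 0 \<Longrightarrow> \<bar>qa s - qb s\<bar> \<le> \<delta>"
    and sg: "\<sigma> \<ge> 0"
  shows "(norm (ua \<sigma> - ub \<sigma>))\<^sup>2 \<le> exp ((2 * Q * L + 1) * \<sigma>) * ((norm (ua 0 - ub 0))\<^sup>2 + \<delta>\<^sup>2 * M\<^sup>2)"
proof -
  have L0: "L \<ge> 0" using lipschitz_on_nonneg[OF lip] .
  define K where "K = 2 * Q * L + 1"
  have K1: "K \<ge> 1" using L0 Q0 by (simp add: K_def)
  define D where "D = \<delta>\<^sup>2 * M\<^sup>2"
  have D0: "D \<ge> 0" by (simp add: D_def)
  define w where "w s = ua s - ub s" for s
  define w' where "w' s = (F - A (ua s) - qa s *\<^sub>R N (ua s)) - (F - A (ub s) - qb s *\<^sub>R N (ub s))" for s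
  have wd: "(w has_vector_derivative w' s) (at s within {0..})" if "s \<ge> 0" for s
    unfolding w_def w'_def by (intro has_vector_derivative_diff d1 d2 that)
  define phi where "phi s = inner (w s) (w s)" for s
  define dphi where "dphi s = 2 * inner (w s) (w' s)" for s
  have phid: "(phi has_real_derivative dphi s) (at s within {0..})" if "s \<ge> 0" for s
    unfolding phi_def dphi_def by (rule sqnorm_deriv[OF wd[OF that]])
  have key: "dphi s \<le> K * phi s + D" if s: "s \<ge> 0" for s
  proof -
    have w'eq: "w' s = - A (w s) - qb s *\<^sub>R (N (ua s) - N (ub s)) - (qa s - qb s) *\<^sub>R N (ua s)"
      by (simp add: w'_def w_def linear_diff[OF lin] algebra_simps)
    have i1: "inner (w s) (A (w s)) \<ge> 0" using Apos by (simp add: inner_commute)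
    have nN: "norm (N (ua s) - N (ub s)) \<le> L * norm (w s)"
      using lipschitz_onD[OF lip, of "ua s" "ub s"] b1[OF s] b2[OF s] by (simp add: w_def dist_norm)
    have i2: "\<bar>inner (w s) (qb s *\<^sub>R (N (ua s) - N (ub s)))\<bar> \<le> Q * L * (norm (w s))\<^sup>2"
    proof -
      have "\<bar>inner (w s) (qb s *\<^sub>R (N (ua s) - N (ub s)))\<bar> \<le> norm (w s) * (\<bar>qb s\<bar> * norm (N (ua s) - N (ub s)))"
        using Cauchy_Schwarz_ineq2[of "w s" "qb s *\<^sub>R (N (ua s) - N (ub s))"] by simp
      also have "\<dots> \<le> norm (w s) * (Q * (L * norm (w s)))"
        by (intro mult_left_mono mult_mono Q[OF s] nN) (use Q0 in auto)
      finally show ?thesis by (simp add: power2_eq_square algebra_simps)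
    qed
    have i3: "\<bar>inner (w s) ((qa s - qb s) *\<^sub>R N (ua s))\<bar> \<le> norm (w s) * (\<delta> * M)"
    proof -
      have "\<bar>inner (w s) ((qa s - qb s) *\<^sub>R N (ua s))\<bar> \<le> norm (w s) * (\<bar>qa s - qb s\<bar> * norm (N (ua s)))"
        using Cauchy_Schwarz_ineq2[of "w s" "(qa s - qb s) *\<^sub>R N (ua s)"] by simp
      also have "\<dots> \<le> norm (w s) * (\<delta> * M)"
        by (intro mult_left_mono mult_mono del[OF s] M b1[OF s]) (use del[OF s] in auto)
      finally show ?thesis .
    qed
    have "dphi s = 2 * (- inner (w s) (A (w s)) - inner (w s) (qb s *\<^sub>R (N (ua s) - N (ub s)))
                   - inner (w s) ((qa s - qb s) *\<^sub>R N (ua s)))"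
      unfolding dphi_def w'eq by (simp add: inner_diff_right inner_minus_right)
    also have "\<dots> \<le> 2 * (Q * L * (norm (w s))\<^sup>2 + norm (w s) * (\<delta> * M))"
    proof -
      have gen: "\<And>(a::real) (b::real) (c::real) (X::real) (Y::real). 0 \<le> a \<Longrightarrow> - b \<le> X \<Longrightarrow> - c \<le> Y \<Longrightarrow> (- a - b - c) \<le> (X + Y)"
        by linarith
      show ?thesis using gen[OF i1 abs_le_D2[OF i2] abs_le_D2[OF i3]] by simp
    qed
    also have "\<dots> \<le> 2 * Q * L * (norm (w s))\<^sup>2 + (norm (w s))\<^sup>2 + D"
    proof -
      have "0 \<le> (norm (w s) - \<delta> * M)\<^sup>2" by simp
      then show ?thesis by (simp add: D_def power2_eq_square algebra_simps)
    qed
    also have "\<dots> = K * phi s + D"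
      by (simp add: K_def phi_def power2_norm_eq_inner algebra_simps)
    finally show ?thesis .
  qed
  define psi where "psi s = exp (- K * s) * (phi s + D)" for s
  have psid: "(psi has_real_derivative exp (- K * s) * (- K) * (phi s + D) + dphi s * exp (- K * s)) (at s within {0..})"
    if "s \<ge> 0" for s
  proof -
    have e: "((\<lambda>s. exp (- K * s)) has_real_derivative exp (- K * s) * (- K)) (at s within {0..})"
      by (auto intro!: derivative_eq_intros)
    have p: "((\<lambda>s. phi s + D) has_real_derivative dphi s) (at s within {0..})"
      using phid[OF that] by (auto intro!: derivative_eq_intros)
    show ?thesis unfolding psi_def using DERIV_mult[OF e p] by simp
  qed
  have neg: "exp (- K * s) * (- K) * (phi s + D) + dphi s * exp (- K * s) \<le> 0" if "s > 0" for s
  proof -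
    have "dphi s - K * (phi s + D) \<le> 0"
      using key[of s] that K1 D0 mult_right_mono[OF K1 D0] by (simp add: algebra_simps)
    then have "exp (- K * s) * (dphi s - K * (phi s + D)) \<le> 0"
      by (simp add: mult_nonneg_nonpos)
    then show ?thesis by (simp add: algebra_simps)
  qed
  have "psi \<sigma> \<le> psi 0" by (rule nonincr_lemma[OF psid neg sg])
  then have "exp (- K * \<sigma>) * (phi \<sigma> + D) \<le> phi 0 + D" by (simp add: psi_def)
  then have "phi \<sigma> + D \<le> exp (K * \<sigma>) * (phi 0 + D)"
    by (simp add: exp_minus field_simps)
  then have "phi \<sigma> \<le> exp (K * \<sigma>) * (phi 0 + D)" using D0 by linarith
  then show ?thesis
    by (simp add: phi_def w_def K_def D_def power2_norm_eq_inner)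
qed


lemma semiflow_eq:
  assumes wp: "well_posed f" and x: "fwd_solution f u0 x" and t: "t \<ge> 0"
  shows "semiflow f t u0 = x t"
  unfolding semiflow_def
proof (rule the_equality)
  show "\<exists>y. fwd_solution f u0 y \<and> y t = x t" using x by blast
next
  fix v assume "\<exists>y. fwd_solution f u0 y \<and> y t = v"
  then obtain y where y: "fwd_solution f u0 y" "y t = v" by blast
  obtain X where X: "\<forall>y. fwd_solution f u0 y \<longrightarrow> (\<forall>t\<ge>0. y t = X t)"
    using wp unfolding well_posed_def by blast
  show "v = x t" using X y x t by metis
qed

lemma vd_fst:
  assumes "(z has_vector_derivative z') F"
  shows "((\<lambda>t. fst (z t)) has_vector_derivative fst z') F"
  using has_derivative_fst[OF assms[unfolded has_vector_derivative_def]]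
  unfolding has_vector_derivative_def by simp

lemma vd_snd:
  assumes "(z has_vector_derivative z') F"
  shows "((\<lambda>t. snd (z t)) has_vector_derivative snd z') F"
  using has_derivative_snd[OF assms[unfolded has_vector_derivative_def]]
  unfolding has_vector_derivative_def by simp

lemma infdist_pair:
  fixes v :: "'a::real_normed_vector"
  shows "infdist (v, 1::real) (Att \<times> {1}) = infdist v Att"
proof -
  have "Att \<times> {1::real} = (\<lambda>a. (a, 1)) ` Att" by auto
  then show ?thesis
    by (simp add: infdist_def image_image dist_Pair_Pair)
qed

lemma q_formula:
  fixes q :: "real \<Rightarrow> real"
  assumes d: "\<And>t. t \<ge> 0 \<Longrightarrow> (q has_real_derivative - \<gamma> * q t + \<gamma>) (at t within {0..})"
    and t: "t \<ge> 0"
  shows "q t = 1 + (q 0 - 1) * exp (- \<gamma> * t)"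
proof -
  define psi where "psi s = exp (\<gamma> * s) * (q s - 1)" for s
  have pd: "(psi has_real_derivative 0) (at s within {0..})" if "s \<ge> 0" for s
  proof -
    have e: "((\<lambda>s. exp (\<gamma> * s)) has_real_derivative exp (\<gamma> * s) * \<gamma>) (at s within {0..})"
      by (auto intro!: derivative_eq_intros)
    have p: "((\<lambda>s. q s - 1) has_real_derivative - \<gamma> * q s + \<gamma>) (at s within {0..})"
      using d[OF that] by (auto intro!: derivative_eq_intros)
    show ?thesis unfolding psi_def using DERIV_mult[OF e p] by (simp add: algebra_simps)
  qed
  have mpd: "((\<lambda>s. - psi s) has_real_derivative 0) (at s within {0..})" if "s \<ge> 0" for s
    using pd[OF that] by (auto intro!: derivative_eq_intros)
  have "psi t \<le> psi 0" using nonincr_lemma[where d="\<lambda>_. 0", OF pd _ t] by simp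
  moreover have "- psi t \<le> - psi 0" using nonincr_lemma[where d="\<lambda>_. 0", OF mpd _ t] by simp
  ultimately have "psi t = psi 0" by simp
  then have "exp (\<gamma> * t) * (q t - 1) = q 0 - 1" by (simp add: psi_def)
  then have "q t - 1 = (q 0 - 1) * exp (- \<gamma> * t)"
    by (simp add: exp_minus field_simps)
  then show ?thesis by simp
qed


lemma aug_sol:
  fixes A N :: "'a::real_inner \<Rightarrow> 'a"
  assumes N_orth: "\<forall>u. inner (N u) u = 0"
    and z: "fwd_solution (augmented_field A N F \<gamma>) (u0, q0) z" and t: "t \<ge> 0"
  shows "snd (z t) = 1 + (q0 - 1) * exp (- \<gamma> * t)"
    and "((\<lambda>t. fst (z t)) has_vector_derivative
            F - A (fst (z t)) - (1 + (q0 - 1) * exp (- \<gamma> * t)) *\<^sub>R N (fst (z t))) (at t within {0..})"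
proof -
  have z0: "z 0 = (u0, q0)" and zd: "\<And>t. t \<ge> 0 \<Longrightarrow> (z has_vector_derivative augmented_field A N F \<gamma> (z t)) (at t within {0..})"
    using z unfolding fwd_solution_def by auto
  have af: "augmented_field A N F \<gamma> (z t) = (F - A (fst (z t)) - snd (z t) *\<^sub>R N (fst (z t)), - \<gamma> * snd (z t) + \<gamma>)" for t
    using N_orth by (simp add: augmented_field_def split: prod.splits)
  have qd: "((\<lambda>t. snd (z t)) has_real_derivative - \<gamma> * snd (z t) + \<gamma>) (at t within {0..})" if "t \<ge> 0" for t
    using vd_snd[OF zd[OF that]] af[of t] by (simp add: has_real_derivative_iff_has_vector_derivative)
  have qf: "snd (z t) = 1 + (q0 - 1) * exp (- \<gamma> * t)" if "t \<ge> 0" for t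
    using q_formula[of "\<lambda>t. snd (z t)" \<gamma>, OF qd that] z0 by simp
  show "snd (z t) = 1 + (q0 - 1) * exp (- \<gamma> * t)" by (rule qf[OF t])
  show "((\<lambda>t. fst (z t)) has_vector_derivative
            F - A (fst (z t)) - (1 + (q0 - 1) * exp (- \<gamma> * t)) *\<^sub>R N (fst (z t))) (at t within {0..})"
    using vd_fst[OF zd[OF t]] af[of t] qf[OF t] by simp
qed


lemma qf_bound:
  fixes \<gamma> t q0 :: real
  assumes g: "\<gamma> > 0" and t: "t \<ge> 0"
  shows "\<bar>(q0 - 1) * exp (- \<gamma> * t)\<bar> \<le> \<bar>q0 - 1\<bar>"
proof -
  have "\<gamma> * t \<ge> 0" using g t by simp
  then have "exp (- \<gamma> * t) \<le> 1" by simp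
  then show ?thesis by (simp add: abs_mult mult_left_le)
qed

lemma aug_exists:
  fixes A N :: "'a::euclidean_space \<Rightarrow> 'a"
  assumes A_lin: "bounded_linear A"
    and coer: "\<forall>u. inner (A u) u \<ge> c * (norm u)\<^sup>2" and c: "c > 0"
    and N_loclip: "\<forall>x. \<exists>r>0. \<exists>L. L-lipschitz_on (cball x r) N"
    and N_orth: "\<forall>u. inner (N u) u = 0" and g: "\<gamma> > 0"
  shows "\<exists>z. fwd_solution (augmented_field A N F \<gamma>) (u0, q0) z"
proof -
  define qf where "qf t = 1 + (q0 - 1) * exp (- \<gamma> * t)" for t
  define R where "R = max (norm u0) (norm F / c) + 1"
  have "max (norm u0) (norm F / c) \<ge> 0" by (simp add: le_max_iff_disj)
  then have R: "R > 0" unfolding R_def by linarith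
  define r where "r = closest_point (cball (0::'a) R)"
  obtain L where lip: "L-lipschitz_on (cball 0 R) N" using N_lip_ball[OF N_loclip] by blast
  have L0: "L \<ge> 0" using lipschitz_on_nonneg[OF lip] .
  have rin: "r u \<in> cball 0 R" for u
    unfolding r_def by (rule closest_point_in_set) (use R in auto)
  have rlip: "norm (r u - r v) \<le> norm (u - v)" for u v
    using closest_point_lipschitz[of "cball (0::'a) R" u v] R by (simp add: r_def dist_norm)
  have Nr: "norm (N (r u) - N (r v)) \<le> L * norm (u - v)" for u v
  proof -
    have "norm (N (r u) - N (r v)) \<le> L * norm (r u - r v)"
      using lipschitz_onD[OF lip rin rin] by (simp add: dist_norm)
    also have "\<dots> \<le> L * norm (u - v)" by (rule mult_left_mono[OF rlip L0])
    finally show ?thesis .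
  qed
  have Nrc: "continuous_on UNIV (\<lambda>u. N (r u))"
    by (rule lipschitz_on_continuous_on[of L]) (rule lipschitz_onI, use Nr L0 in \<open>auto simp: dist_norm\<close>)
  obtain KA where KA: "\<And>x. norm (A x) \<le> norm x * KA" and KA0: "KA > 0"
    using bounded_linear.pos_bounded[OF A_lin] by blast
  define Q where "Q = 1 + \<bar>q0 - 1\<bar>"
  have Q0: "Q \<ge> 0" by (simp add: Q_def)
  have qQ: "\<bar>qf t\<bar> \<le> Q" if "t \<ge> 0" for t
    unfolding qf_def Q_def using qf_bound[OF g that, of q0] by linarith
  define f where "f t u = F - A u - qf t *\<^sub>R N (r u)" for t u
  have flip: "norm (f t u - f t v) \<le> (KA + Q * L) * norm (u - v)" if t: "t \<ge> 0" for t u v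
  proof -
    have "f t u - f t v = - A (u - v) - qf t *\<^sub>R (N (r u) - N (r v))"
      by (simp add: f_def linear_diff[OF bounded_linear.linear[OF A_lin]] algebra_simps)
    also have "norm \<dots> \<le> norm (A (u - v)) + \<bar>qf t\<bar> * norm (N (r u) - N (r v))"
      by (rule order_trans[OF norm_triangle_ineq4]) simp
    also have "\<dots> \<le> norm (u - v) * KA + Q * (L * norm (u - v))"
      by (intro add_mono KA mult_mono qQ t Nr) (use Q0 in auto)
    finally show ?thesis by (simp add: algebra_simps)
  qed
  have fcont: "continuous_on {0..} (\<lambda>s. f s (x s))" if "continuous_on {0..} x" for x
    unfolding f_def qf_def
    by (intro continuous_intros that continuous_on_compose2[OF Nrc that]
          linear_continuous_on_compose[OF _ bounded_linear.linear[OF A_lin]]) auto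
  obtain u where u0: "u 0 = u0" and ud: "\<And>t. t \<ge> 0 \<Longrightarrow> (u has_vector_derivative f t (u t)) (at t within {0..})"
    using picard[of "KA + Q * L" f, OF _ flip fcont] KA0 Q0 L0 by fastforce
  have orth': "inner (qf t *\<^sub>R N (r v)) v = 0" for t v
    using closest_orth[OF N_orth R, of v] by (simp add: r_def)
  have ub: "norm (u t) \<le> max (norm u0) (norm F / c)" if "t \<ge> 0" for t
    using apriori[where G="\<lambda>t v. qf t *\<^sub>R N (r v)" and u=u and F=F, OF coer c _ orth' that] ud u0
    by (simp add: f_def)
  have ru: "r (u t) = u t" if "t \<ge> 0" for t
    unfolding r_def by (rule closest_point_self) (use ub[OF that] in \<open>simp add: R_def\<close>)
  define z where "z t = (u t, qf t)" for t
  show ?thesis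
  proof (intro exI, unfold fwd_solution_def, intro conjI allI impI)
    show "z 0 = (u0, q0)" by (simp add: z_def u0 qf_def)
    fix t :: real assume t: "t \<ge> 0"
    have qd: "(qf has_vector_derivative - \<gamma> * qf t + \<gamma>) (at t within {0..})"
      unfolding qf_def has_real_derivative_iff_has_vector_derivative[symmetric]
      by (auto intro!: derivative_eq_intros simp: algebra_simps)
    have "(z has_vector_derivative (f t (u t), - \<gamma> * qf t + \<gamma>)) (at t within {0..})"
      unfolding z_def by (intro has_vector_derivative_Pair ud t qd)
    moreover have "augmented_field A N F \<gamma> (z t) = (f t (u t), - \<gamma> * qf t + \<gamma>)"
      using N_orth ru[OF t] by (simp add: augmented_field_def z_def f_def)
    ultimately show "(z has_vector_derivative augmented_field A N F \<gamma> (z t)) (at t within {0..})"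
      by simp
  qed
qed


lemma N_bound:
  assumes lip: "L-lipschitz_on (cball 0 R) N" and v: "norm v \<le> R"
  shows "norm (N v) \<le> norm (N 0) + L * R"
proof -
  have L0: "L \<ge> 0" using lipschitz_on_nonneg[OF lip] .
  have "R \<ge> 0" using v norm_ge_zero order_trans by blast
  then have "norm (N v - N 0) \<le> L * norm (v - 0)"
    using lipschitz_onD[OF lip, of v 0] v by (simp add: dist_norm)
  also have "\<dots> \<le> L * R" using v L0 by (simp add: mult_left_mono)
  finally show ?thesis using norm_triangle_ineq2[of "N v" "N 0"] by linarith
qed

lemma aug_unique:
  fixes A N :: "'a::euclidean_space \<Rightarrow> 'a"
  assumes A_lin: "bounded_linear A"
    and coer: "\<forall>u. inner (A u) u \<ge> c * (norm u)\<^sup>2" and c: "c > 0"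
    and N_loclip: "\<forall>x. \<exists>r>0. \<exists>L. L-lipschitz_on (cball x r) N"
    and N_orth: "\<forall>u. inner (N u) u = 0" and g: "\<gamma> > 0"
    and z1: "fwd_solution (augmented_field A N F \<gamma>) (u0, q0) z1"
    and z2: "fwd_solution (augmented_field A N F \<gamma>) (u0, q0) z2"
    and t: "t \<ge> 0"
  shows "z1 t = z2 t"
proof -
  define qf where "qf t = 1 + (q0 - 1) * exp (- \<gamma> * t)" for t
  define u1 where "u1 t = fst (z1 t)" for t
  define u2 where "u2 t = fst (z2 t)" for t
  have d1: "(u1 has_vector_derivative F - A (u1 s) - qf s *\<^sub>R N (u1 s)) (at s within {0..})" if "s \<ge> 0" for s
    unfolding u1_def qf_def by (rule aug_sol(2)[OF N_orth z1 that])
  have d2: "(u2 has_vector_derivative F - A (u2 s) - qf s *\<^sub>R N (u2 s)) (at s within {0..})" if "s \<ge> 0" for s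
    unfolding u2_def qf_def by (rule aug_sol(2)[OF N_orth z2 that])
  have i1: "u1 0 = u0" using z1 by (simp add: fwd_solution_def u1_def)
  have i2: "u2 0 = u0" using z2 by (simp add: fwd_solution_def u2_def)
  define R where "R = max (norm u0) (norm F / c)"
  have orth': "inner (qf t *\<^sub>R N v) v = 0" for t v using N_orth by simp
  have b1: "norm (u1 s) \<le> R" if "s \<ge> 0" for s
    using apriori[where G="\<lambda>t v. qf t *\<^sub>R N v" and u=u1, OF coer c d1 orth' that] i1 by (simp add: R_def)
  have b2: "norm (u2 s) \<le> R" if "s \<ge> 0" for s
    using apriori[where G="\<lambda>t v. qf t *\<^sub>R N v" and u=u2, OF coer c d2 orth' that] i2 by (simp add: R_def)
  obtain L where lip: "L-lipschitz_on (cball 0 R) N" using N_lip_ball[OF N_loclip] by blast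
  have Apos: "\<forall>w. inner (A w) w \<ge> 0" using coer c by (meson order_trans zero_le_mult_iff zero_le_power2 less_imp_le)
  have Q: "\<bar>qf s\<bar> \<le> 1 + \<bar>q0 - 1\<bar>" if "s \<ge> 0" for s
    unfolding qf_def using qf_bound[OF g that, of q0] by linarith
  have "(norm (u1 t - u2 t))\<^sup>2 \<le> exp ((2 * (1 + \<bar>q0 - 1\<bar>) * L + 1) * t) * ((norm (u1 0 - u2 0))\<^sup>2 + 0\<^sup>2 * (norm (N 0) + L * R)\<^sup>2)"
    by (rule compare[OF bounded_linear.linear[OF A_lin] Apos d1 d2 b1 b2 lip N_bound[OF lip] Q _ _ t])
       (auto simp: abs_le_iff)
  then have "u1 t = u2 t" using i1 i2 by simp
  moreover have "snd (z1 t) = snd (z2 t)"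
    using aug_sol(1)[OF N_orth z1 t] aug_sol(1)[OF N_orth z2 t] by simp
  ultimately show ?thesis by (simp add: u1_def u2_def prod_eq_iff)
qed


theorem proposition2:
  fixes A N :: "'a::euclidean_space \<Rightarrow> 'a" and F :: 'a and \<gamma> l0 :: real
    and Att :: "'a set"
  assumes A_lin: "bounded_linear A"
    and A_sym: "symmetric_op A"
    and A_pos: "\<forall>u. u \<noteq> 0 \<longrightarrow> inner (A u) u > 0"
    and l0_pos: "l0 > 0"
    and coerc: "\<forall>S. bounded_linear S \<and> symmetric_op S \<and> (\<forall>u. inner (S u) u \<ge> 0) \<and> S \<circ> S = A
                  \<longrightarrow> (\<forall>u. (norm (S u))\<^sup>2 \<ge> l0 * (norm u)\<^sup>2)"
    and N_loclip: "\<forall>x. \<exists>r>0. \<exists>L. L-lipschitz_on (cball x r) N"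
    and N_orth: "\<forall>u. inner (N u) u = 0"
    and gamma_pos: "\<gamma> > 0"
    and Att: "global_attractor (original_field A N F) Att"
  shows "global_attractor (augmented_field A N F \<gamma>) (Att \<times> {1})"
proof -
  obtain c where c: "c > 0" and coer: "\<forall>u. inner (A u) u \<ge> c * (norm u)\<^sup>2"
    using coercive_exists[OF A_lin A_pos] by blast
  have Apos: "\<forall>w. inner (A w) w \<ge> 0" using coer c by (meson order_trans zero_le_mult_iff zero_le_power2 less_imp_le)
  define fo where "fo = original_field A N F"
  define fa where "fa = augmented_field A N F \<gamma>"
  have WPo: "well_posed fo" and Attne: "Att \<noteq> {}" and Attc: "compact Att"
    and inv: "\<And>t. t \<ge> 0 \<Longrightarrow> semiflow fo t ` Att = Att"
    and attr: "\<And>B e. bounded B \<Longrightarrow> e > 0 \<Longrightarrow> \<exists>T. \<forall>t\<ge>T. \<forall>b\<in>B. infdist (semiflow fo t b) Att < e"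
    using Att unfolding global_attractor_def fo_def by auto
  have WPa: "well_posed fa"
    unfolding well_posed_def
  proof
    fix w0 :: "'a \<times> real"
    obtain u0 q0 where w0: "w0 = (u0, q0)" by fastforce
    obtain z where z: "fwd_solution fa (u0, q0) z"
      using aug_exists[OF A_lin coer c N_loclip N_orth gamma_pos] unfolding fa_def by blast
    show "\<exists>x. fwd_solution fa w0 x \<and> (\<forall>y. fwd_solution fa w0 y \<longrightarrow> (\<forall>t\<ge>0. y t = x t))"
      using z aug_unique[OF A_lin coer c N_loclip N_orth gamma_pos] unfolding w0 fa_def by blast
  qed
  have osol: "\<exists>x. fwd_solution fo a x" for a
    using WPo unfolding well_posed_def by blast
  have od: "(x has_vector_derivative F - A (x s) - 1 *\<^sub>R N (x s)) (at s within {0..})"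
    if "fwd_solution fo a x" "s \<ge> 0" for x a s
    using that by (simp add: fwd_solution_def fo_def original_field_def)
  have sf1: "semiflow fa t (a, 1) = (semiflow fo t a, 1)" if t: "t \<ge> 0" for t a
  proof -
    obtain x where x: "fwd_solution fo a x" using osol by blast
    define z where "z s = (x s, 1::real)" for s
    have "fwd_solution fa (a, 1) z"
      unfolding fwd_solution_def
    proof (intro conjI allI impI)
      show "z 0 = (a, 1)" using x by (simp add: z_def fwd_solution_def)
      fix s :: real assume s: "s \<ge> 0"
      have "(z has_vector_derivative (F - A (x s) - 1 *\<^sub>R N (x s), 0)) (at s within {0..})"
        unfolding z_def by (intro has_vector_derivative_Pair od[OF x s] has_vector_derivative_const)
      moreover have "fa (z s) = (F - A (x s) - 1 *\<^sub>R N (x s), 0)"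
        using N_orth by (simp add: fa_def augmented_field_def z_def)
      ultimately show "(z has_vector_derivative fa (z s)) (at s within {0..})" by simp
    qed
    then have "semiflow fa t (a, 1) = z t" by (rule semiflow_eq[OF WPa _ t])
    also have "\<dots> = (semiflow fo t a, 1)" using semiflow_eq[OF WPo x t] by (simp add: z_def)
    finally show ?thesis .
  qed
  have inva: "semiflow fa t ` (Att \<times> {1}) = Att \<times> {1}" if t: "t \<ge> 0" for t
  proof -
    have "semiflow fa t ` (Att \<times> {1}) = (\<lambda>b. (b, 1::real)) ` (semiflow fo t ` Att)"
      using sf1[OF t] by (auto simp: image_iff)
    also have "\<dots> = Att \<times> {1}" using inv[OF t] by auto
    finally show ?thesis .
  qed
  have attra: "\<exists>T. \<forall>t\<ge>T. \<forall>b\<in>B. infdist (semiflow fa t b) (Att \<times> {1}) < e"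
    if B: "bounded B" and e: "e > 0" for B e
  proof -
    obtain R0 where R0: "R0 > 0" and RB: "\<And>b. b \<in> B \<Longrightarrow> norm b \<le> R0"
      using B bounded_pos by blast
    define R1 where "R1 = max R0 (norm F / c)"
    have R1: "R1 \<ge> R0" by (simp add: R1_def)
    obtain L where lip: "L-lipschitz_on (cball 0 R1) N" using N_lip_ball[OF N_loclip] by blast
    have L0: "L \<ge> 0" using lipschitz_on_nonneg[OF lip] .
    define M where "M = norm (N 0) + L * R1"
    have Mb: "\<And>v. norm v \<le> R1 \<Longrightarrow> norm (N v) \<le> M" unfolding M_def by (rule N_bound[OF lip])
    have M0: "M \<ge> 0" using Mb[of 0] R1 R0 by (auto intro: order_trans[OF norm_ge_zero])
    have e2: "e / 2 > 0" using e by simp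
    obtain T1 where T1: "\<And>t b. t \<ge> T1 \<Longrightarrow> b \<in> cball 0 R1 \<Longrightarrow> infdist (semiflow fo t b) Att < e / 2"
      using attr[OF bounded_cball e2] by blast
    define \<tau> where "\<tau> = max T1 0"
    have \<tau>0: "\<tau> \<ge> 0" and \<tau>T: "\<tau> \<ge> T1" by (auto simp: \<tau>_def)
    define K where "K = 2 * 1 * L + 1"
    define C where "C = exp (K * \<tau> / 2) * M + 1"
    have C1: "C \<ge> 1" using M0 by (simp add: C_def)
    define \<eta> where "\<eta> = e / (4 * C)"
    have \<eta>0: "\<eta> > 0" using e C1 by (simp add: \<eta>_def)
    have \<eta>e: "\<eta> \<le> e / 4" using e C1 unfolding \<eta>_def by (simp add: field_simps)
    have \<eta>C: "exp (K * \<tau> / 2) * M * \<eta> < e / 4"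
    proof -
      have "exp (K * \<tau> / 2) * M * \<eta> < C * \<eta>" using \<eta>0 by (simp add: C_def algebra_simps)
      also have "C * \<eta> = e / 4" using C1 by (simp add: \<eta>_def)
      finally show ?thesis .
    qed
    define s0 where "s0 = max 0 (ln ((R0 + 1) / \<eta>) / \<gamma>)"
    have s0: "s0 \<ge> 0" by (simp add: s0_def)
    have small: "(R0 + 1) * exp (- \<gamma> * s) \<le> \<eta>" if s: "s \<ge> s0" for s
    proof -
      have "ln ((R0 + 1) / \<eta>) / \<gamma> \<le> s" using s by (simp add: s0_def)
      then have "ln ((R0 + 1) / \<eta>) \<le> \<gamma> * s" using gamma_pos by (simp add: divide_le_eq mult.commute)
      then have "exp (ln ((R0 + 1) / \<eta>)) \<le> exp (\<gamma> * s)" by simp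
      moreover have "(R0 + 1) / \<eta> > 0" using R0 \<eta>0 by simp
      ultimately have "(R0 + 1) / \<eta> \<le> exp (\<gamma> * s)" by simp
      then have "R0 + 1 \<le> \<eta> * exp (\<gamma> * s)" using \<eta>0 by (simp add: divide_le_eq mult.commute)
      then show ?thesis by (simp add: exp_minus field_simps)
    qed
    show ?thesis
    proof (intro exI allI impI ballI)
      fix t b assume t: "t \<ge> s0 + \<tau>" and b: "b \<in> B"
      obtain u0 q0 where b': "b = (u0, q0)" by fastforce
      have u0b: "norm u0 \<le> R0" using RB[OF b] norm_fst_le[of u0 q0] b' by simp
      have q0b: "\<bar>q0\<bar> \<le> R0" using RB[OF b] norm_snd_le[of q0 u0] b' by simp
      obtain z where z: "fwd_solution fa (u0, q0) z"
        using aug_exists[OF A_lin coer c N_loclip N_orth gamma_pos] unfolding fa_def by blast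
      have t0: "t \<ge> 0" using t s0 \<tau>0 by linarith
      define qf where "qf t = 1 + (q0 - 1) * exp (- \<gamma> * t)" for t
      define u where "u t = fst (z t)" for t
      have sfa: "semiflow fa t b = (u t, qf t)"
        using semiflow_eq[OF WPa z t0] aug_sol(1)[OF N_orth z[unfolded fa_def] t0]
        by (simp add: b' u_def qf_def prod_eq_iff)
      have ud: "(u has_vector_derivative F - A (u s) - qf s *\<^sub>R N (u s)) (at s within {0..})" if "s \<ge> 0" for s
        unfolding u_def qf_def by (rule aug_sol(2)[OF N_orth z[unfolded fa_def] that])
      have ui: "u 0 = u0" using z by (simp add: fwd_solution_def u_def)
      have orth': "inner (qf t *\<^sub>R N v) v = 0" for t v using N_orth by simp
      have ub: "norm (u s) \<le> R1" if "s \<ge> 0" for s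
        using apriori[where G="\<lambda>t v. qf t *\<^sub>R N v" and u=u, OF coer c ud orth' that] ui u0b
        by (simp add: R1_def le_max_iff_disj max_def split: if_splits)
      define s where "s = t - \<tau>"
      have ss0: "s \<ge> s0" and s0': "s \<ge> 0" using t s0 by (auto simp: s_def)
      obtain v where v: "fwd_solution fo (u s) v" using osol by blast
      have vd: "(v has_vector_derivative F - A (v \<sigma>) - 1 *\<^sub>R N (v \<sigma>)) (at \<sigma> within {0..})" if "\<sigma> \<ge> 0" for \<sigma>
        by (rule od[OF v that])
      have vi: "v 0 = u s" using v by (simp add: fwd_solution_def)
      have orth1: "inner (1 *\<^sub>R N w) w = 0" for w using N_orth by simp
      have vb: "norm (v \<sigma>) \<le> R1" if "\<sigma> \<ge> 0" for \<sigma>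
        using apriori[where G="\<lambda>t w. 1 *\<^sub>R N w" and u=v, OF coer c vd orth1 that] vi ub[OF s0']
        by (simp add: R1_def le_max_iff_disj max_def split: if_splits)
      have vinf: "infdist (v \<tau>) Att < e / 2"
        using T1[OF \<tau>T, of "u s"] ub[OF s0'] semiflow_eq[OF WPo v \<tau>0] by simp
      define \<delta> where "\<delta> = (R0 + 1) * exp (- \<gamma> * s)"
      have \<delta>\<eta>: "\<delta> \<le> \<eta>" unfolding \<delta>_def by (rule small[OF ss0])
      have \<delta>0: "\<delta> \<ge> 0" using R0 by (simp add: \<delta>_def)
      have d1: "((\<lambda>\<sigma>. u (s + \<sigma>)) has_vector_derivative F - A (u (s + \<sigma>)) - qf (s + \<sigma>) *\<^sub>R N (u (s + \<sigma>))) (at \<sigma> within {0..})"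
        if "\<sigma> \<ge> 0" for \<sigma>
        by (rule shift_deriv[where f="\<lambda>t. F - A (u t) - qf t *\<^sub>R N (u t)", OF ud s0' that])
      have del: "\<bar>qf (s + \<sigma>) - 1\<bar> \<le> \<delta>" if "\<sigma> \<ge> 0" for \<sigma>
      proof -
        have "\<bar>qf (s + \<sigma>) - 1\<bar> = \<bar>q0 - 1\<bar> * exp (- \<gamma> * (s + \<sigma>))" by (simp add: qf_def abs_mult)
        also have "\<dots> \<le> (R0 + 1) * exp (- \<gamma> * s)"
        proof (rule mult_mono)
          show "\<bar>q0 - 1\<bar> \<le> R0 + 1" using q0b by linarith
          have "\<gamma> * \<sigma> \<ge> 0" using gamma_pos that by simp
          then show "exp (- \<gamma> * (s + \<sigma>)) \<le> exp (- \<gamma> * s)" by (simp add: algebra_simps)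
        qed (use R0 in auto)
        finally show ?thesis by (simp add: \<delta>_def)
      qed
      have cmp: "(norm (u (s + \<tau>) - v \<tau>))\<^sup>2 \<le> exp ((2 * 1 * L + 1) * \<tau>) * ((norm (u (s + 0) - v 0))\<^sup>2 + \<delta>\<^sup>2 * M\<^sup>2)"
        by (rule compare[where ua="\<lambda>\<sigma>. u (s + \<sigma>)" and qa="\<lambda>\<sigma>. qf (s + \<sigma>)" and qb="\<lambda>_. 1",
              OF bounded_linear.linear[OF A_lin] Apos d1 vd _ vb lip Mb _ _ del \<tau>0])
           (use ub s0' in auto)
      have ts: "s + \<tau> = t" by (simp add: s_def)
      have "(norm (u t - v \<tau>))\<^sup>2 \<le> (exp (K * \<tau> / 2) * \<delta> * M)\<^sup>2"
      proof -
        have "(exp (K * \<tau> / 2))\<^sup>2 = exp (K * \<tau>)"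
          by (simp add: power2_eq_square exp_add[symmetric])
        then show ?thesis using cmp vi ts by (simp add: K_def power_mult_distrib)
      qed
      then have "norm (u t - v \<tau>) \<le> exp (K * \<tau> / 2) * \<delta> * M"
        by (rule power2_le_imp_le) (use \<delta>0 M0 in simp)
      also have "\<dots> \<le> exp (K * \<tau> / 2) * M * \<eta>"
        using \<delta>\<eta> M0 by (simp add: mult.commute mult.left_commute mult_left_mono)
      finally have un: "norm (u t - v \<tau>) < e / 4" using \<eta>C by linarith
      have qn: "\<bar>qf t - 1\<bar> \<le> e / 4"
      proof -
        have "\<bar>qf t - 1\<bar> = \<bar>q0 - 1\<bar> * exp (- \<gamma> * t)" by (simp add: qf_def abs_mult)
        also have "\<dots> \<le> (R0 + 1) * exp (- \<gamma> * t)"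
          by (rule mult_right_mono) (use q0b in auto)
        also have "\<dots> \<le> \<eta>" by (rule small) (use t \<tau>0 in linarith)
        finally show ?thesis using \<eta>e by linarith
      qed
      have "infdist (u t, qf t) (Att \<times> {1}) \<le> infdist (v \<tau>, 1::real) (Att \<times> {1}) + dist (u t, qf t) (v \<tau>, 1::real)"
        by (rule infdist_triangle)
      also have "infdist (v \<tau>, 1::real) (Att \<times> {1}) = infdist (v \<tau>) Att" by (rule infdist_pair)
      also have "dist (u t, qf t) (v \<tau>, 1::real) \<le> dist (u t) (v \<tau>) + dist (qf t) 1"
        unfolding dist_Pair_Pair by (rule order_trans[OF sqrt_sum_squares_le_sum_abs]) simp
      finally have "infdist (u t, qf t) (Att \<times> {1}) < e / 2 + e / 4 + e / 4"
        using vinf un qn by (simp add: dist_norm)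
      then show "infdist (semiflow fa t b) (Att \<times> {1}) < e" using sfa by simp
    qed
  qed
  show ?thesis
    unfolding global_attractor_def fa_def[symmetric]
    using WPa Attne compact_Times[OF Attc compact_sing] inva attra by auto
qed

end
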